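(* Let $G$ be a finite simple graph and suppose the automorphism group $\mathrm{Aut}(G)$ contains an element $\sigma$ of order $2$ such that, for every $v\in V(G)$, $\sigma(v)\neq v$ and $v\sigma(v)\notin E(G)$. Then $G$ is a $\mathcal{P}$ position for Grim.
   Context: Grim is a two-player game on a finite simple undirected graph. Any isolated vertices of the starting graph are deleted before play begins. Players alternate moves; a move consists of selecting a vertex of the current graph and deleting it together with all its incident edges, after which every vertex that has become isolated is also deleted. The player who makes the last legal move wins (a player facing the empty graph has no move and loses). A graph is an $\mathcal{N}$ position if the player about to move has a winning strategy, and a $\mathcal{P}$ position otherwise. An automorphism of $G$ is a permutation of $V(G)$ preserving adjacency. *)

theory Defs
  imports Main
begin

text \<open>Positions of Grim reached from a graph (V,E) are induced subgraphs on vertex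
  sets S \<subseteq> V, so a position is represented by its vertex set S (edges induced by E).\<close>

definition simple_graph :: "'a set \<Rightarrow> ('a \<Rightarrow> 'a \<Rightarrow> bool) \<Rightarrow> bool" where
  "simple_graph V E \<longleftrightarrow> finite V \<and> (\<forall>u v. E u v \<longrightarrow> u \<in> V \<and> v \<in> V)
     \<and> (\<forall>u v. E u v \<longrightarrow> E v u) \<and> (\<forall>v. \<not> E v v)"

definition del_isolated :: "('a \<Rightarrow> 'a \<Rightarrow> bool) \<Rightarrow> 'a set \<Rightarrow> 'a set" where
  "del_isolated E S = {v \<in> S. \<exists>u \<in> S. E v u}"

definition grim_move :: "('a \<Rightarrow> 'a \<Rightarrow> bool) \<Rightarrow> 'a set \<Rightarrow> 'a \<Rightarrow> 'a set" where
  "grim_move E S v = del_isolated E (S - {v})"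

lemma bex_cong_fundef[fundef_cong]:
  "S = S' \<Longrightarrow> (\<And>x. x \<in> S' \<Longrightarrow> P x = P' x) \<Longrightarrow> (\<exists>x\<in>S. P x) = (\<exists>x\<in>S'. P' x)"
  by auto

function grim_N :: "('a \<Rightarrow> 'a \<Rightarrow> bool) \<Rightarrow> 'a set \<Rightarrow> bool" where
  "grim_N E S = (if finite S then (\<exists>v \<in> S. \<not> grim_N E (grim_move E S v)) else False)"
  by auto
lemma grim_move_card_less:
  "finite S \<Longrightarrow> v \<in> S \<Longrightarrow> card (grim_move E S v) < card S"
proof -
  assume f: "finite S" and v: "v \<in> S"
  have "grim_move E S v \<subseteq> S - {v}" unfolding grim_move_def del_isolated_def by auto
  hence "card (grim_move E S v) \<le> card (S - {v})" using f by (simp add: card_mono)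
  also have "\<dots> < card S" using f v by (meson card_Diff1_less)
  finally show ?thesis .
qed

termination
  by (relation "measure (\<lambda>(E, S). card S)") (auto simp: grim_move_card_less)

definition grim_P :: "('a \<Rightarrow> 'a \<Rightarrow> bool) \<Rightarrow> 'a set \<Rightarrow> bool" where
  "grim_P E S \<longleftrightarrow> \<not> grim_N E S"

definition grim_start :: "'a set \<Rightarrow> ('a \<Rightarrow> 'a \<Rightarrow> bool) \<Rightarrow> 'a set" where
  "grim_start V E = del_isolated E V"

definition graph_automorphism :: "'a set \<Rightarrow> ('a \<Rightarrow> 'a \<Rightarrow> bool) \<Rightarrow> ('a \<Rightarrow> 'a) \<Rightarrow> bool" where
  "graph_automorphism V E \<sigma> \<longleftrightarrow> bij_betw \<sigma> V V \<and> (\<forall>u\<in>V. \<forall>v\<in>V. E u v \<longleftrightarrow> E (\<sigma> u) (\<sigma> v))"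

definition has_order_two :: "'a set \<Rightarrow> ('a \<Rightarrow> 'a) \<Rightarrow> bool" where
  "has_order_two V \<sigma> \<longleftrightarrow> (\<forall>v\<in>V. \<sigma> (\<sigma> v) = v) \<and> (\<exists>v\<in>V. \<sigma> v \<noteq> v)"

end

theory Submission
  imports Defs
begin

lemma del_iso_twice:
  assumes sym: "\<forall>u v. E u v \<longrightarrow> E v u"
  shows "del_isolated E (del_isolated E A - B) = del_isolated E (A - B)"
  using sym unfolding del_isolated_def by blast

lemma grim_N_unfold: "grim_N E S = (finite S \<and> (\<exists>v \<in> S. \<not> grim_N E (grim_move E S v)))"
  by (subst grim_N.simps) auto

lemma main_lemma:
  assumes sg: "simple_graph V E"
    and aut: "graph_automorphism V E \<sigma>"
    and inv: "\<forall>v\<in>V. \<sigma> (\<sigma> v) = v"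
    and fp: "\<forall>v\<in>V. \<sigma> v \<noteq> v \<and> \<not> E v (\<sigma> v)"
  shows "S \<subseteq> V \<Longrightarrow> \<sigma> ` S = S \<Longrightarrow> \<not> grim_N E (del_isolated E S)"
proof (induct "card S" arbitrary: S rule: less_induct)
  case less
  have finV: "finite V" and Ein: "\<forall>u v. E u v \<longrightarrow> u \<in> V \<and> v \<in> V"
    and sym: "\<forall>u v. E u v \<longrightarrow> E v u" using sg unfolding simple_graph_def by auto
  have bij: "bij_betw \<sigma> V V" and pres: "\<forall>u\<in>V. \<forall>v\<in>V. E u v \<longleftrightarrow> E (\<sigma> u) (\<sigma> v)"
    using aut unfolding graph_automorphism_def by auto
  have finS: "finite S" using less(2) finV finite_subset by blast
  define D where "D = del_isolated E S"
  show ?case unfolding D_def[symmetric]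
  proof
    assume "grim_N E D"
    then obtain v where vD: "v \<in> D" and nN: "\<not> grim_N E (grim_move E D v)"
      using grim_N_unfold by metis
    from vD obtain u where vS: "v \<in> S" and uS: "u \<in> S" and Evu: "E v u"
      unfolding D_def del_isolated_def by auto
    have vV: "v \<in> V" and uV: "u \<in> V" using less(2) vS uS by auto
    have Es: "E (\<sigma> v) (\<sigma> u)" using pres vV uV Evu by blast
    have svS: "\<sigma> v \<in> S" and suS: "\<sigma> u \<in> S" using less(3) vS uS by auto
    have svv: "\<sigma> v \<noteq> v" using fp vV by auto
    have suv: "\<sigma> u \<noteq> v"
    proof
      assume "\<sigma> u = v"
      hence "E v (\<sigma> v)" using Es sym by auto
      thus False using fp vV by auto
    qed
    have svD: "\<sigma> v \<in> D" using svS suS Es unfolding D_def del_isolated_def by auto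
    have suD: "\<sigma> u \<in> D" using svS suS Es sym unfolding D_def del_isolated_def by blast
    have mem: "\<sigma> v \<in> grim_move E D v"
      unfolding grim_move_def del_isolated_def using svD suD svv suv Es by blast
    define S' where "S' = S - {v, \<sigma> v}"
    have gm2: "grim_move E (grim_move E D v) (\<sigma> v) = del_isolated E S'"
      unfolding grim_move_def D_def S'_def
      using del_iso_twice[OF sym, of "del_isolated E S - {v}" "{\<sigma> v}"]
        del_iso_twice[OF sym, of "S" "{v}"] del_iso_twice[OF sym, of "S - {v}" "{\<sigma> v}"]
      by (simp add: Diff_insert2[symmetric] del_isolated_def)
    have injS: "inj_on \<sigma> S" using bij less(2) bij_betw_imp_inj_on inj_on_subset by blast
    have "\<sigma> ` S' = \<sigma> ` S - \<sigma> ` {v, \<sigma> v}"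
      unfolding S'_def by (rule inj_on_image_set_diff[OF injS]) (use vS svS in auto)
    also have "\<dots> = S' " using less(3) inv vV unfolding S'_def by (simp add: insert_commute)
    finally have invS': "\<sigma> ` S' = S'" .
    have "S' \<subset> S" unfolding S'_def using vS by blast
    hence cardS': "card S' < card S" using finS by (rule psubset_card_mono[rotated])
    have "S' \<subseteq> V" using less(2) unfolding S'_def by blast
    hence "\<not> grim_N E (del_isolated E S')"
      using less(1)[OF cardS'] invS' by blast
    moreover have "finite (grim_move E D v)"
      using finS unfolding grim_move_def D_def del_isolated_def by (rule finite_subset[rotated]) blast
    ultimately have "grim_N E (grim_move E D v)"
      apply (subst grim_N_unfold)
      using mem gm2 \<open>\<not> grim_N E (del_isolated E S')\<close> by (intro conjI bexI[of _ "\<sigma> v"]) simp_all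
    thus False using nN by simp
  qed
qed

theorem theorem4p2:
  fixes V :: "'a set" and E :: "'a \<Rightarrow> 'a \<Rightarrow> bool" and \<sigma> :: "'a \<Rightarrow> 'a"
  assumes "simple_graph V E"
    and "graph_automorphism V E \<sigma>"
    and "has_order_two V \<sigma>"
    and "\<forall>v\<in>V. \<sigma> v \<noteq> v \<and> \<not> E v (\<sigma> v)"
  shows "grim_P E (grim_start V E)"
proof -
  have inv: "\<forall>v\<in>V. \<sigma> (\<sigma> v) = v" using assms(3) unfolding has_order_two_def by auto
  have "\<sigma> ` V = V" using assms(2) unfolding graph_automorphism_def bij_betw_def by auto
  thus ?thesis using main_lemma[OF assms(1,2) inv assms(4), of V]
    unfolding grim_P_def grim_start_def by auto
qed

end
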